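(* Let $f$ be a piecewise smooth function with rational discontinuities at $0\le x_1<\dots<x_\nu<1$; put $x_0=0$, $A_i=\lim_{\delta\to0}[f(x_i-\delta)-f(x_i+\delta)]$, $c_i=\sum_{j=1}^iA_j$, and $g(x)=(\{x\}-\tfrac12)\sum_{i=1}^\nu A_i+\sum_{i=1}^\nu c_i(\mathbb{1}_{[x_{i-1},x_i)}(\{x\})-(x_i-x_{i-1}))$. Assume $\sum_{i=1}^\nu A_i\ne0$ or $\sum_{i=1}^\nu c_i(x_i-x_{i-1})\ne0$. Then there exist constants $c,c'>0$ and integers $\mu_j,\beta_j,\gamma_j,\delta_j$ ($j=1,2$), depending on $f$, and a constant $D>0$ such that for every irrational $\alpha=[0;a_1,a_2,\dots]$ the following holds for all sufficiently large $K$ with $a_K$ sufficiently large: (1) if $K\equiv\mu_1\pmod{\beta_1}$ and $q_{K-1}\equiv\gamma_1\pmod{\delta_1}$, then for every integer $0\le b\le ca_K$, $S_{bq_{K-1}}(g,\alpha)\ge bc'-D\sum_{i=1}^{K-1}a_i$; (2) if $K\equiv\mu_2\pmod{\beta_2}$ and $q_{K-1}\equiv\gamma_2\pmod{\delta_2}$, then for every integer $0\le b\le ca_K$, $S_{bq_{K-1}}(g,\alpha)\le -bc'+D\sum_{i=1}^{K-1}a_i$.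
   Context: $\{x\}$ is the fractional part; $q_k$ are the convergent denominators of $\alpha$ ($q_0=1,q_1=a_1,q_{k+1}=a_{k+1}q_k+q_{k-1}$). $S_N(g,\alpha):=\sum_{n=1}^N g(n\alpha)-N\int_0^1 g$. A $1$-periodic $f$ is a piecewise smooth function with rational discontinuities if there exist $\nu\ge1$ and rationals $0\le x_1<\dots<x_\nu<1$ such that $f$ is differentiable on $[0,1)\setminus\{x_1,\dots,x_\nu\}$, the restriction of $f'$ to $[0,1)$ extends to a function of bounded variation on $[0,1)$, and $\lim_{\delta\to0}[f(x_i-\delta)-f(x_i+\delta)]\ne0$ for some $i$. *)

theory Defs
  imports "HOL-Analysis.Analysis"
begin

definition bounded_variation_on :: "(real \<Rightarrow> real) \<Rightarrow> real set \<Rightarrow> bool" where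
  "bounded_variation_on h S \<longleftrightarrow>
     (\<exists>B. \<forall>ts::real list. sorted ts \<and> set ts \<subseteq> S \<longrightarrow>
        (\<Sum>k<length ts - 1. \<bar>h (ts ! Suc k) - h (ts ! k)\<bar>) \<le> B)"

definition pw_smooth_rat_disc :: "(real \<Rightarrow> real) \<Rightarrow> nat \<Rightarrow> (nat \<Rightarrow> real) \<Rightarrow> bool" where
  "pw_smooth_rat_disc f \<nu> x \<longleftrightarrow>
     (\<forall>y. f (y + 1) = f y) \<and>
     \<nu> \<ge> 1 \<and>
     (\<forall>i\<in>{1..\<nu>}. x i \<in> \<rat>) \<and>
     0 \<le> x 1 \<and> x \<nu> < 1 \<and>
     (\<forall>i\<in>{1..<\<nu>}. x i < x (Suc i)) \<and>
     (\<forall>y\<in>{0..<1} - x ` {1..\<nu>}. f differentiable (at y)) \<and>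
     (\<exists>h. bounded_variation_on h {0..<1} \<and>
          (\<forall>y\<in>{0..<1} - x ` {1..\<nu>}. h y = deriv f y)) \<and>
     (\<exists>i\<in>{1..\<nu>}. \<exists>L. L \<noteq> 0 \<and>
          ((\<lambda>\<delta>. f (x i - \<delta>) - f (x i + \<delta>)) \<longlongrightarrow> L) (at_right 0))"

definition jump :: "(real \<Rightarrow> real) \<Rightarrow> real \<Rightarrow> real" where
  "jump f p = Lim (at_right 0) (\<lambda>\<delta>. f (p - \<delta>) - f (p + \<delta>))"

definition gauss_map :: "real \<Rightarrow> real" where
  "gauss_map t = frac (1 / t)"

definition cf_a :: "real \<Rightarrow> nat \<Rightarrow> nat" where
  "cf_a \<alpha> k = nat \<lfloor>1 / ((gauss_map ^^ (k - 1)) \<alpha>)\<rfloor>"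

fun cf_q :: "real \<Rightarrow> nat \<Rightarrow> nat" where
  "cf_q \<alpha> 0 = 1"
| "cf_q \<alpha> (Suc 0) = cf_a \<alpha> 1"
| "cf_q \<alpha> (Suc (Suc k)) = cf_a \<alpha> (Suc (Suc k)) * cf_q \<alpha> (Suc k) + cf_q \<alpha> k"

definition S_sum :: "nat \<Rightarrow> (real \<Rightarrow> real) \<Rightarrow> real \<Rightarrow> real" where
  "S_sum N g \<alpha> = (\<Sum>n=1..N. g (real n * \<alpha>)) - real N * integral {0..1} g"

end

theory Submission
  imports Defs "HOL-Number_Theory.Cong"
begin


definition aseq :: "real \<Rightarrow> nat \<Rightarrow> real" where
  "aseq \<alpha> k = (gauss_map ^^ k) \<alpha>"

fun cf_p :: "real \<Rightarrow> nat \<Rightarrow> nat" where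
  "cf_p \<alpha> 0 = 0"
| "cf_p \<alpha> (Suc 0) = 1"
| "cf_p \<alpha> (Suc (Suc k)) = cf_a \<alpha> (Suc (Suc k)) * cf_p \<alpha> (Suc k) + cf_p \<alpha> k"

definition Pp :: "real \<Rightarrow> nat \<Rightarrow> real" where
  "Pp \<alpha> k = (\<Prod>i\<le>k. aseq \<alpha> i)"

lemma aseq_props:
  assumes "0 < \<alpha>" "\<alpha> < 1" "\<alpha> \<notin> \<rat>"
  shows "0 < aseq \<alpha> k \<and> aseq \<alpha> k < 1 \<and> aseq \<alpha> k \<notin> \<rat>"
proof (induction k)
  case 0 then show ?case using assms by (simp add: aseq_def)
next
  case (Suc k)
  let ?t = "aseq \<alpha> k"
  have eq: "aseq \<alpha> (Suc k) = frac (1 / ?t)" by (simp add: aseq_def gauss_map_def)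
  have ir: "1 / ?t \<notin> \<rat>" using Suc by (metis Rats_divide Rats_1 divide_divide_eq_right div_by_1 mult_1)
  have nz: "1 / ?t \<notin> \<int>" using ir Ints_subset_Rats by blast
  have "frac (1 / ?t) \<notin> \<rat>"
  proof
    assume "frac (1 / ?t) \<in> \<rat>"
    then have "of_int \<lfloor>1 / ?t\<rfloor> + frac (1 / ?t) \<in> \<rat>" by (simp add: Rats_add)
    then show False using ir by (simp add: frac_def)
  qed
  then show ?case using eq nz by (simp add: frac_lt_1)
qed


lemma cf_a_rel:
  assumes "0 < \<alpha>" "\<alpha> < 1" "\<alpha> \<notin> \<rat>"
  shows "real (cf_a \<alpha> (Suc k)) = 1 / aseq \<alpha> k - aseq \<alpha> (Suc k) \<and> cf_a \<alpha> (Suc k) \<ge> 1"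
proof -
  let ?t = "aseq \<alpha> k"
  have t: "0 < ?t" "?t < 1" using aseq_props[OF assms] by auto
  have "1 < 1 / ?t" using t by simp
  then have fl: "\<lfloor>1 / ?t\<rfloor> \<ge> 1" by (simp add: le_floor_iff)
  have ca: "cf_a \<alpha> (Suc k) = nat \<lfloor>1 / ?t\<rfloor>" by (simp add: cf_a_def aseq_def)
  have a: "real (cf_a \<alpha> (Suc k)) = of_int \<lfloor>1 / ?t\<rfloor>" unfolding ca
    using fl by (intro of_nat_nat) linarith
  have a1: "cf_a \<alpha> (Suc k) \<ge> 1" unfolding ca using fl by linarith
  have "aseq \<alpha> (Suc k) = frac (1 / ?t)" by (simp add: aseq_def gauss_map_def)
  then show ?thesis using a a1 by (simp add: frac_def)
qed

lemma Pp_Suc: "Pp \<alpha> (Suc k) = Pp \<alpha> k * aseq \<alpha> (Suc k)"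
  by (simp add: Pp_def)

lemma Pp_pos:
  assumes "0 < \<alpha>" "\<alpha> < 1" "\<alpha> \<notin> \<rat>"
  shows "Pp \<alpha> k > 0"
  unfolding Pp_def using aseq_props[OF assms] by (simp add: prod_pos)

lemma Pp_rec:
  assumes "0 < \<alpha>" "\<alpha> < 1" "\<alpha> \<notin> \<rat>"
  shows "Pp \<alpha> (Suc (Suc k)) = Pp \<alpha> k - real (cf_a \<alpha> (Suc (Suc k))) * Pp \<alpha> (Suc k)"
proof -
  have r: "real (cf_a \<alpha> (Suc (Suc k))) = 1 / aseq \<alpha> (Suc k) - aseq \<alpha> (Suc (Suc k))"
    using cf_a_rel[OF assms] by blast
  have t: "aseq \<alpha> (Suc k) > 0" using aseq_props[OF assms] by auto
  show ?thesis unfolding r Pp_Suc using t by (simp add: field_simps)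
qed

definition th :: "real \<Rightarrow> nat \<Rightarrow> real" where
  "th \<alpha> k = real (cf_q \<alpha> k) * \<alpha> - real (cf_p \<alpha> k)"

lemma th_eq:
  assumes "0 < \<alpha>" "\<alpha> < 1" "\<alpha> \<notin> \<rat>"
  shows "th \<alpha> k = (-1)^k * Pp \<alpha> k \<and> th \<alpha> (Suc k) = (-1)^(Suc k) * Pp \<alpha> (Suc k)"
proof (induction k)
  case 0
  have r: "real (cf_a \<alpha> (Suc 0)) = 1 / \<alpha> - aseq \<alpha> (Suc 0)"
    using cf_a_rel[OF assms, of 0] by (simp add: aseq_def)
  have "Pp \<alpha> (Suc 0) = \<alpha> * aseq \<alpha> (Suc 0)" by (simp add: Pp_def aseq_def)
  then show ?case using r assms by (simp add: th_def Pp_def aseq_def field_simps)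
next
  case (Suc k)
  have "th \<alpha> (Suc (Suc k)) = real (cf_a \<alpha> (Suc (Suc k))) * th \<alpha> (Suc k) + th \<alpha> k"
    by (simp add: th_def algebra_simps)
  also have "\<dots> = (-1)^(Suc (Suc k)) * Pp \<alpha> (Suc (Suc k))"
    using Suc.IH by (simp add: Pp_rec[OF assms, of k] algebra_simps)
  finally show ?case using Suc.IH by simp
qed

lemma det_id:
  assumes "0 < \<alpha>" "\<alpha> < 1" "\<alpha> \<notin> \<rat>"
  shows "real (cf_q \<alpha> (Suc k)) * Pp \<alpha> k + real (cf_q \<alpha> k) * Pp \<alpha> (Suc k) = 1"
proof (induction k)
  case 0
  have r: "real (cf_a \<alpha> (Suc 0)) = 1 / \<alpha> - aseq \<alpha> (Suc 0)"
    using cf_a_rel[OF assms, of 0] by (simp add: aseq_def)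
  have "Pp \<alpha> (Suc 0) = \<alpha> * aseq \<alpha> (Suc 0)" by (simp add: Pp_def aseq_def)
  then show ?case using r assms by (simp add: Pp_def aseq_def field_simps)
next
  case (Suc k)
  then show ?case by (simp add: Pp_rec[OF assms, of k] algebra_simps)
qed

lemma pq_det: "int (cf_p \<alpha> (Suc k)) * int (cf_q \<alpha> k) - int (cf_p \<alpha> k) * int (cf_q \<alpha> (Suc k)) = (-1)^k"
proof (induction k)
  case 0 then show ?case by simp
next
  case (Suc k)
  then show ?case by (simp add: algebra_simps)
qed

lemma pq_coprime: "coprime (cf_p \<alpha> k) (cf_q \<alpha> k)"
proof -
  have "int (cf_p \<alpha> (Suc k)) * int (cf_q \<alpha> k) - int (cf_p \<alpha> k) * int (cf_q \<alpha> (Suc k)) = (-1)^k"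
    by (rule pq_det)
  then have "coprime (int (cf_p \<alpha> k)) (int (cf_q \<alpha> k))"
    by (metis (no_types, lifting) coprime_def dvd_diff dvd_mult is_unit_power_iff dvd_refl minus_one_mult_self mult_commute_abs)
  then show ?thesis by simp
qed

lemma q_pos:
  assumes "0 < \<alpha>" "\<alpha> < 1" "\<alpha> \<notin> \<rat>"
  shows "cf_q \<alpha> k \<ge> 1"
proof (induction k rule: nat_less_induct)
  case (1 n)
  show ?case
  proof (cases n)
    case (Suc m)
    show ?thesis
    proof (cases m)
      case 0 then show ?thesis using Suc cf_a_rel[OF assms, of 0] by simp
    next
      case (Suc k) then show ?thesis using 1 \<open>n = Suc m\<close> by (simp add: add_increasing)
    qed
  qed simp
qed

lemma q_ge:
  assumes "0 < \<alpha>" "\<alpha> < 1" "\<alpha> \<notin> \<rat>" "K \<ge> 1"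
  shows "cf_q \<alpha> K \<ge> cf_a \<alpha> K * cf_q \<alpha> (K - 1)"
proof (cases K)
  case (Suc m) then show ?thesis by (cases m) auto
qed (use assms in auto)



lemma int_cmp:
  fixes X :: int and L R :: real
  assumes "L > 0" "0 < R" "R < L"
  shows "(L * of_int X \<le> R \<longleftrightarrow> X \<le> 0) \<and> (L * of_int X < R \<longleftrightarrow> X \<le> 0)"
proof (cases "X \<le> 0")
  case True
  then have "L * of_int X \<le> 0" using assms by (simp add: mult_nonneg_nonpos)
  then show ?thesis using True assms by auto
next
  case False
  then have "of_int X \<ge> (1::real)" by simp
  then have "L * of_int X \<ge> L" using assms by (metis mult_le_cancel_left1 order_less_imp_not_less)
  then show ?thesis using False assms by linarith
qed

lemma frac_form:
  fixes \<alpha> \<theta> :: real and p q n L :: nat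
  assumes q: "q \<ge> 1" and L: "L \<ge> 1" and al: "\<alpha> = (real p + \<theta>) / real q" and th: "\<theta> \<noteq> 0"
    and sm: "real L * real n * \<bar>\<theta>\<bar> < 1" and n1: "n \<ge> 1"
  defines "d \<equiv> (if \<theta> > 0 then 0 else 1::nat)"
    and "c \<equiv> (if \<theta> > 0 then 0 else q - 1)"
  shows "frac (real n * \<alpha>) = real ((n * p + c) mod q + d) / real q + real n * \<theta> / real q"
proof -
  define v where "v = (n * p + c) mod q"
  have vq: "v < q" using q by (simp add: v_def)
  have cong: "[v + d = n * p] (mod q)"
  proof (cases "\<theta> > 0")
    case True then show ?thesis by (simp add: v_def c_def d_def cong_def)
  next
    case False
    have "[v + 1 = (n * p + (q - 1)) + 1] (mod q)" by (simp add: v_def c_def False cong_def mod_Suc_eq)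
    also have "(n * p + (q - 1)) + 1 = n * p + q" using q by simp
    also have "[n * p + q = n * p] (mod q)" by (simp add: cong_def)
    finally show ?thesis using False by (simp add: d_def)
  qed
  then have "[int (v + d) = int (n * p)] (mod int q)" using cong_int_iff by blast
  then obtain z :: int where z: "int (n * p) = int (v + d) + int q * z"
    using cong_iff_lin by blast
  have eta: "\<bar>real n * \<theta> / real q\<bar> < 1 / real q"
  proof -
    have nn: "real n * \<bar>\<theta>\<bar> \<ge> 0" by simp
    have "1 * (real n * \<bar>\<theta>\<bar>) \<le> real L * (real n * \<bar>\<theta>\<bar>)"
      using L nn by (intro mult_right_mono) auto
    then have "real n * \<bar>\<theta>\<bar> < 1" using sm by (simp add: mult.assoc)
    then show ?thesis using q by (simp add: abs_mult divide_strict_right_mono)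
  qed
  have "real n * \<alpha> = real (n * p) / real q + real n * \<theta> / real q"
    unfolding al by (simp add: distrib_left add_divide_distrib)
  also have "real (n * p) = real (v + d) + real q * of_int z"
    using z by (metis of_int_add of_int_mult of_int_of_nat_eq)
  finally have na: "real n * \<alpha> = of_int z + (real (v + d) / real q + real n * \<theta> / real q)"
    using q by (simp add: field_simps)
  have rng: "0 \<le> real (v + d) / real q + real n * \<theta> / real q \<and> real (v + d) / real q + real n * \<theta> / real q < 1"
  proof (cases "\<theta> > 0")
    case True
    then have "d = 0" by (simp add: d_def)
    moreover have "real v + 1 \<le> real q" using vq by linarith
    moreover have "real n * \<theta> / real q \<ge> 0" using True by simp
    moreover have "real n * \<theta> / real q < 1 / real q" using eta by linarith
    moreover have "real v / real q + 1 / real q \<le> 1"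
      using \<open>real v + 1 \<le> real q\<close> q by (simp add: add_divide_distrib[symmetric])
    ultimately show ?thesis by simp
  next
    case False
    then have tn: "\<theta> < 0" using th by simp
    then have "d = 1" by (simp add: d_def)
    moreover have "real v + 1 \<le> real q" using vq by linarith
    moreover have "real n * \<theta> / real q < 0" using tn n1 q by (intro divide_neg_pos mult_pos_neg) auto
    moreover have "real n * \<theta> / real q > - (1 / real q)" using abs_less_iff[THEN iffD1, OF eta] by (simp add: minus_less_iff)
    moreover have "real (v + d) / real q \<le> 1" using \<open>real v + 1 \<le> real q\<close> q \<open>d = 1\<close> by simp
    moreover have "real (v + d) / real q \<ge> 1 / real q" using q \<open>d = 1\<close> by (simp add: divide_right_mono)
    ultimately show ?thesis by linarith
  qed
  show ?thesis unfolding v_def[symmetric] using na rng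
    by (simp add: frac_unique_iff)
qed

lemma core_cmp:
  fixes Lr qr s k v d rho e F R :: real
  assumes "Lr > 0" "qr > 0" "F = (v + d) / qr + e / qr" "k * Lr = qr + rho"
    "R = s * rho + Lr * d + Lr * e"
  shows "(s / Lr \<le> F \<longleftrightarrow> Lr * (k * s - v) \<le> R) \<and> (F < s / Lr \<longleftrightarrow> R < Lr * (k * s - v))"
proof -
  have h: "qr * F = v + d + e" using assms(2,3) by (simp add: field_simps)
  have "Lr * qr * F = Lr * (qr * F)" by simp
  also have "\<dots> = Lr * (v + d) + Lr * e" unfolding h by (simp add: algebra_simps)
  finally have "Lr * qr * F = Lr * (v + d) + Lr * e" .
  moreover have "s * qr = Lr * k * s - s * rho" using assms(4) by (simp add: algebra_simps)
  moreover have "s / Lr \<le> F \<longleftrightarrow> s * qr \<le> Lr * qr * F" using assms(1,2)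
    by (simp add: divide_le_eq mult.commute mult.left_commute)
  moreover have "F < s / Lr \<longleftrightarrow> Lr * qr * F < s * qr" using assms(1,2)
    by (simp add: less_divide_eq mult.commute mult.left_commute)
  ultimately show ?thesis using assms(5)
    apply (simp add: algebra_simps)
    apply (intro conjI iffI)
    apply linarith+
    done
qed

lemma ind_form:
  fixes \<alpha> \<theta> :: real and p q n L k \<sigma> :: nat and \<rho> :: int
  assumes q: "q \<ge> 1" and L: "L \<ge> 1" and al: "\<alpha> = (real p + \<theta>) / real q" and th: "\<theta> \<noteq> 0"
    and sm: "real L * real n * \<bar>\<theta>\<bar> < 1" and n1: "n \<ge> 1"
    and kL: "int (k * L) = int q + \<rho>" and rho: "\<rho> \<in> {-1, 0, 1}"
    and r1: "\<rho> = 1 \<Longrightarrow> \<theta> > 0" and r2: "\<rho> = -1 \<Longrightarrow> \<theta> < 0"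
    and sL: "\<sigma> < L"
  defines "d \<equiv> (if \<theta> > 0 then 0 else 1::nat)"
    and "c \<equiv> (if \<theta> > 0 then 0 else q - 1)"
  shows "(real \<sigma> / real L \<le> frac (real n * \<alpha>) \<longleftrightarrow> k * \<sigma> \<le> (n * p + c) mod q) \<and>
         (frac (real n * \<alpha>) < real \<sigma> / real L \<longleftrightarrow> (n * p + c) mod q < k * \<sigma>)"
proof -
  define v where "v = (n * p + c) mod q"
  define R where "R = real \<sigma> * of_int \<rho> + real L * real d + real L * (real n * \<theta>)"
  have F: "frac (real n * \<alpha>) = (real v + real d) / real q + (real n * \<theta>) / real q"
    using frac_form[OF q L al th sm n1] unfolding v_def d_def c_def by simp
  have kLr: "real k * real L = real q + of_int \<rho>"
  proof -
    have "real_of_int (int (k * L)) = real_of_int (int q + \<rho>)" using kL by simp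
    then show ?thesis by simp
  qed
  have cc: "(real \<sigma> / real L \<le> frac (real n * \<alpha>) \<longleftrightarrow> real L * (real k * real \<sigma> - real v) \<le> R) \<and>
    (frac (real n * \<alpha>) < real \<sigma> / real L \<longleftrightarrow> R < real L * (real k * real \<sigma> - real v))"
    by (rule core_cmp[OF _ _ F kLr R_def]) (use q L in auto)
  have sL': "real \<sigma> \<le> real L - 1" using sL by linarith
  have e1: "real L * (real n * \<bar>\<theta>\<bar>) < 1" using sm by (simp add: mult.assoc)
  have Rb: "0 < R \<and> R < real L"
  proof (cases "\<theta> > 0")
    case True
    then have d0: "d = 0" by (simp add: d_def)
    have "\<rho> = 0 \<or> \<rho> = 1" using rho r2 True by auto
    then have sr: "0 \<le> real \<sigma> * of_int \<rho> \<and> real \<sigma> * of_int \<rho> \<le> real L - 1" using sL' by auto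
    have "real L * (real n * \<theta>) > 0" using True n1 L by simp
    moreover have "real L * (real n * \<theta>) < 1" using e1 True by simp
    ultimately show ?thesis using sr d0 unfolding R_def by simp
  next
    case False
    then have tn: "\<theta> < 0" using th by simp
    then have d1: "d = 1" by (simp add: d_def)
    have "\<rho> = 0 \<or> \<rho> = -1" using rho r1 tn by auto
    then have sr: "- (real L - 1) \<le> real \<sigma> * of_int \<rho> \<and> real \<sigma> * of_int \<rho> \<le> 0" using sL' by auto
    have "real L * (real n * \<theta>) < 0" using tn n1 L by (simp add: mult_pos_neg)
    moreover have "real L * (real n * \<theta>) > -1" using e1 tn by (simp add: abs_if)
    ultimately show ?thesis using sr d1 unfolding R_def by simp
  qed
  have ic0: "(real L * of_int (int (k * \<sigma>) - int v) \<le> R \<longleftrightarrow> int (k * \<sigma>) - int v \<le> 0) \<and>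
            (real L * of_int (int (k * \<sigma>) - int v) < R \<longleftrightarrow> int (k * \<sigma>) - int v \<le> 0)"
    by (rule int_cmp) (use Rb L in auto)
  have ic: "(real L * (real k * real \<sigma> - real v) \<le> R \<longleftrightarrow> k * \<sigma> \<le> v) \<and>
            (real L * (real k * real \<sigma> - real v) < R \<longleftrightarrow> k * \<sigma> \<le> v)"
  proof -
    have e1: "real_of_int (int (k * \<sigma>) - int v) = real k * real \<sigma> - real v" by simp
    have e2: "(int (k * \<sigma>) - int v \<le> 0) = (k * \<sigma> \<le> v)" by (simp only: diff_le_0_iff_le of_nat_le_iff)
    show ?thesis using ic0 unfolding e1 e2 .
  qed
  have "R < real L * (real k * real \<sigma> - real v) \<longleftrightarrow> \<not> (real L * (real k * real \<sigma> - real v) \<le> R)"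
    by linarith
  then show ?thesis unfolding v_def[symmetric] using cc ic by (meson not_le)
qed



lemma sum_lt_real: "(\<Sum>v<q. real v) = real q * (real q - 1) / 2"
  by (induction q) (auto simp: field_simps)

lemma sum_periodic:
  fixes h :: "nat \<Rightarrow> real"
  shows "(\<Sum>n<b * q. h (n mod q)) = real b * (\<Sum>r<q. h r)"
proof (induction b)
  case 0 then show ?case by simp
next
  case (Suc b)
  have "{..<Suc b * q} = {0..<b * q} \<union> {b * q..<b * q + q}" by auto
  then have "(\<Sum>n<Suc b * q. h (n mod q)) = (\<Sum>n\<in>{0..<b * q}. h (n mod q)) + (\<Sum>n\<in>{b * q..<b * q + q}. h (n mod q))"
    by (simp add: sum.union_disjoint ivl_disj_int)
  also have "(\<Sum>n\<in>{b * q..<b * q + q}. h (n mod q)) = (\<Sum>n\<in>{0..<q}. h ((n + b * q) mod q))"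
    using sum.shift_bounds_nat_ivl[of "\<lambda>n. h (n mod q)" 0 "b * q" q] by (simp add: add.commute)
  also have "\<dots> = (\<Sum>r<q. h r)" by (simp add: lessThan_atLeast0)
  finally show ?case using Suc by (simp add: lessThan_atLeast0 algebra_simps)
qed

lemma perm_sum:
  fixes H :: "nat \<Rightarrow> real" and p q c b :: nat
  assumes cop: "coprime p q" and q: "q \<ge> 1"
  shows "(\<Sum>n\<in>{1..b * q}. H ((n * p + c) mod q)) = real b * (\<Sum>v<q. H v)"
proof -
  define f where "f r = (Suc r * p + c) mod q" for r
  have per: "(Suc n * p + c) mod q = f (n mod q)" for n
    unfolding f_def by (metis mod_add_left_eq mod_mult_left_eq mod_Suc_eq)
  have "(\<Sum>n\<in>{1..b * q}. H ((n * p + c) mod q)) = (\<Sum>n<b * q. H ((Suc n * p + c) mod q))"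
    using sum.atLeast1_atMost_eq[of "\<lambda>n. H ((n * p + c) mod q)" "b * q"] by simp
  also have "\<dots> = (\<Sum>n<b * q. (H \<circ> f) (n mod q))" by (intro sum.cong refl) (simp only: per o_apply)
  also have "\<dots> = real b * (\<Sum>r<q. (H \<circ> f) r)" by (rule sum_periodic)
  also have "(\<Sum>r<q. (H \<circ> f) r) = (\<Sum>v<q. H v)"
  proof -
    have inj: "inj_on f {..<q}"
    proof
      fix r s assume r: "r \<in> {..<q}" and s: "s \<in> {..<q}" and e: "f r = f s"
      then have "[Suc r * p + c = Suc s * p + c] (mod q)" by (simp add: f_def cong_def)
      then have "[Suc r * p = Suc s * p] (mod q)" by (simp add: cong_add_rcancel_nat)
      then have "[Suc r = Suc s] (mod q)" using cong_mult_rcancel_nat[OF cop] by blast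
      then have "[r = s] (mod q)" by (metis Suc_eq_plus1 cong_add_rcancel_nat)
      then show "r = s" using r s by (simp add: cong_def)
    qed
    have img: "f ` {..<q} = {..<q}"
      by (rule endo_inj_surj) (use inj q in \<open>auto simp: f_def\<close>)
    show ?thesis using sum.reindex[OF inj, of H] img by simp
  qed
  finally show ?thesis .
qed

lemma count_sum:
  fixes a b q :: nat
  assumes "a \<le> b" "b \<le> q"
  shows "(\<Sum>v<q. (if a \<le> v \<and> v < b then 1 else 0 :: real)) = real b - real a"
proof -
  have "(\<Sum>v<q. (if a \<le> v \<and> v < b then 1 else 0 :: real)) = real (card {v. v < q \<and> a \<le> v \<and> v < b})"
    by (simp add: sum.If_cases Int_def)
  also have "{v. v < q \<and> a \<le> v \<and> v < b} = {a..<b}" using assms by auto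
  finally show ?thesis using assms by simp
qed



lemma int_ind:
  fixes s t :: real
  assumes "0 \<le> s" "s \<le> t" "t \<le> 1"
  shows "((\<lambda>y. indicator {s..<t} (frac y) :: real) has_integral (t - s)) {0..1}"
proof -
  have c: "((\<lambda>_. 1::real) has_integral (t - s)) {s..t}"
    using has_integral_const_real[of "1::real" s t] assms by simp
  have h: "((\<lambda>x. if x \<in> {s..t} then 1 else 0 :: real) has_integral (t - s)) {0..1}"
    using c assms by (subst has_integral_restrict) auto
  have p: "indicator {s..<t} (frac y) = (if y \<in> {s..t} then 1 else 0 :: real)"
    if y: "y \<in> {0..1} - {1, t}" for y
  proof -
    have "frac y = y" using y by (simp add: frac_eq)
    then show ?thesis using y by (auto simp: indicator_def)
  qed
  show ?thesis by (rule has_integral_spike_finite[where S="{1,t}", OF _ p h]) auto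
qed

lemma int_frac:
  "((\<lambda>y. frac y - 1/2) has_integral 0) {0..1::real}"
proof -
  have a: "((\<lambda>y. y) has_integral 1/2) {0..1::real}" using ident_has_integral[of 0 1] by simp
  have b: "((\<lambda>y::real. 1/2::real) has_integral 1/2) {0..1::real}" using has_integral_const_real[of "1/2::real" 0 1] by simp
  have h: "((\<lambda>y. y - 1/2) has_integral 0) {0..1::real}"
    using has_integral_diff[OF a b] by simp
  have p: "frac y - 1/2 = y - 1/2" if y: "y \<in> {0..1} - {1::real}" for y
    using y by (simp add: frac_eq)
  show ?thesis by (rule has_integral_spike_finite[where S="{1}", OF _ p h]) auto
qed

lemma integral_g_zero:
  fixes g :: "real \<Rightarrow> real" and x c :: "nat \<Rightarrow> real" and SA :: real
  assumes hg: "\<And>y. g y = (frac y - 1/2) * SA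
              + (\<Sum>i=1..\<nu>. c i * (indicator {x (i - 1)..<x i} (frac y) - (x i - x (i - 1))))"
    and hx: "\<And>i. i \<in> {1..\<nu>} \<Longrightarrow> 0 \<le> x (i - 1) \<and> x (i - 1) \<le> x i \<and> x i \<le> 1"
  shows "integral {0..1} g = 0"
proof -
  have A: "((\<lambda>y. (frac y - 1/2) * SA) has_integral 0 * SA) {0..1}"
    by (rule has_integral_mult_left[OF int_frac])
  have B: "((\<lambda>y. \<Sum>i=1..\<nu>. c i * (indicator {x (i - 1)..<x i} (frac y) - (x i - x (i - 1))))
      has_integral (\<Sum>i=1..\<nu>. 0)) {0..1}"
  proof (rule has_integral_sum)
    fix i assume i: "i \<in> {1..\<nu>}"
    have a: "((\<lambda>y. indicator {x (i - 1)..<x i} (frac y) :: real) has_integral (x i - x (i - 1))) {0..1}"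
      using int_ind hx[OF i] by blast
    have b: "((\<lambda>y. x i - x (i - 1)) has_integral (x i - x (i - 1))) {0..1::real}"
      using has_integral_const_real[of "x i - x (i - 1)" 0 1] by simp
    have "((\<lambda>y. indicator {x (i - 1)..<x i} (frac y) - (x i - x (i - 1))) has_integral 0) {0..1}"
      using has_integral_diff[OF a b] by simp
    from has_integral_mult_right[OF this, of "c i"]
    show "((\<lambda>y. c i * (indicator {x (i - 1)..<x i} (frac y) - (x i - x (i - 1)))) has_integral 0) {0..1}"
      by simp
  qed simp
  have "((\<lambda>y. (frac y - 1/2) * SA + (\<Sum>i=1..\<nu>. c i * (indicator {x (i - 1)..<x i} (frac y) - (x i - x (i - 1)))))
     has_integral (0 * SA + (\<Sum>i=1..\<nu>. 0))) {0..1}"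
    by (rule has_integral_add[OF A B])
  then have "(g has_integral 0) {0..1}" unfolding hg[abs_def] by simp
  then show ?thesis by (rule integral_unique)
qed



lemma block:
  fixes \<alpha> \<theta> SA M :: real and p q k L b \<nu> :: nat and \<rho> :: int and \<sigma> :: "nat \<Rightarrow> nat"
    and c x :: "nat \<Rightarrow> real" and g :: "real \<Rightarrow> real"
  assumes q: "q \<ge> 1" and L: "L \<ge> 1" and al: "\<alpha> = (real p + \<theta>) / real q" and th: "\<theta> \<noteq> 0"
    and cop: "coprime p q"
    and sm: "real L * real (b * q) * \<bar>\<theta>\<bar> < 1"
    and kL: "int (k * L) = int q + \<rho>" and rho: "\<rho> \<in> {-1, 0, 1}"
    and r1: "\<rho> = 1 \<Longrightarrow> \<theta> > 0" and r2: "\<rho> = -1 \<Longrightarrow> \<theta> < 0"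
    and sig: "\<And>i. i \<le> \<nu> \<Longrightarrow> \<sigma> i < L \<and> x i = real (\<sigma> i) / real L"
    and mono: "\<And>i. i \<in> {1..\<nu>} \<Longrightarrow> \<sigma> (i - 1) \<le> \<sigma> i"
    and hg: "\<And>y. g y = (frac y - 1/2) * SA
              + (\<Sum>i=1..\<nu>. c i * (indicator {x (i - 1)..<x i} (frac y) - (x i - x (i - 1))))"
    and intg: "integral {0..1} g = 0"
    and M: "M = (\<Sum>i=1..\<nu>. c i * (x i - x (i - 1)))"
  defines "d \<equiv> (if \<theta> > 0 then 0 else 1::nat)"
  shows "S_sum (b * q) g \<alpha> = real b * (SA * (real d - 1/2) + of_int \<rho> * M)
           + SA * (\<Sum>n=1..b * q. real n * \<theta> / real q)"
proof -
  define cc where "cc = (if \<theta> > 0 then 0 else q - 1)"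
  define H where "H v = SA * ((real v + real d) / real q - 1/2)
      + (\<Sum>i=1..\<nu>. c i * ((if k * \<sigma> (i - 1) \<le> v \<and> v < k * \<sigma> i then 1 else 0) - (x i - x (i - 1))))" for v
  have pt: "g (real n * \<alpha>) = H ((n * p + cc) mod q) + SA * (real n * \<theta> / real q)"
    if n: "n \<in> {1..b * q}" for n
  proof -
    have n1: "n \<ge> 1" using n by simp
    have smn: "real L * real n * \<bar>\<theta>\<bar> < 1"
    proof -
      have "real L * real n * \<bar>\<theta>\<bar> \<le> real L * real (b * q) * \<bar>\<theta>\<bar>"
      proof -
        have nb: "real n \<le> real (b * q)" using n of_nat_le_iff by fastforce
        show ?thesis using nb by (intro mult_right_mono mult_left_mono) auto
      qed
      then show ?thesis using sm by linarith
    qed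
    have F: "frac (real n * \<alpha>) = real ((n * p + cc) mod q + d) / real q + real n * \<theta> / real q"
      using frac_form[OF q L al th smn n1] unfolding cc_def d_def by simp
    have I: "indicator {x (i - 1)..<x i} (frac (real n * \<alpha>)) =
        (if k * \<sigma> (i - 1) \<le> (n * p + cc) mod q \<and> (n * p + cc) mod q < k * \<sigma> i then 1 else 0 :: real)"
      if i: "i \<in> {1..\<nu>}" for i
    proof -
      have s1: "\<sigma> (i - 1) < L" "x (i - 1) = real (\<sigma> (i - 1)) / real L" using sig[of "i - 1"] i by auto
      have s2: "\<sigma> i < L" "x i = real (\<sigma> i) / real L" using sig[of i] i by auto
      note A1 = ind_form[OF q L al th smn n1 kL rho r1 r2 s1(1)]
      note A2 = ind_form[OF q L al th smn n1 kL rho r1 r2 s2(1)]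
      show ?thesis using A1 A2 unfolding s1(2) s2(2) cc_def indicator_def
        by (auto simp: not_less)
    qed
    have S: "(\<Sum>i=1..\<nu>. c i * (indicator {x (i - 1)..<x i} (frac (real n * \<alpha>)) - (x i - x (i - 1)))) =
       (\<Sum>i=1..\<nu>. c i * ((if k * \<sigma> (i - 1) \<le> (n * p + cc) mod q \<and> (n * p + cc) mod q < k * \<sigma> i then 1 else 0) - (x i - x (i - 1))))"
      by (rule sum.cong) (simp_all only: I)
    show ?thesis unfolding hg H_def S unfolding F
      by (simp add: algebra_simps add_divide_distrib)
  qed
  have sumg: "(\<Sum>n=1..b * q. g (real n * \<alpha>)) = real b * (\<Sum>v<q. H v) + SA * (\<Sum>n=1..b * q. real n * \<theta> / real q)"
  proof -
    have "(\<Sum>n=1..b * q. g (real n * \<alpha>)) = (\<Sum>n=1..b * q. H ((n * p + cc) mod q) + SA * (real n * \<theta> / real q))"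
      by (rule sum.cong) (simp_all only: pt)
    also have "\<dots> = (\<Sum>n=1..b * q. H ((n * p + cc) mod q)) + SA * (\<Sum>n=1..b * q. real n * \<theta> / real q)"
      by (simp add: sum.distrib sum_distrib_left)
    also have "(\<Sum>n=1..b * q. H ((n * p + cc) mod q)) = real b * (\<Sum>v<q. H v)"
      by (rule perm_sum[OF cop q])
    finally show ?thesis .
  qed
  have kLr: "real k * real L = real q + of_int \<rho>"
  proof -
    have "real_of_int (int (k * L)) = real_of_int (int q + \<rho>)" using kL by simp
    then show ?thesis by simp
  qed
  have cnt: "(\<Sum>v<q. (if k * \<sigma> (i - 1) \<le> v \<and> v < k * \<sigma> i then 1 else 0 :: real))
      = (real q + of_int \<rho>) * (x i - x (i - 1))" if i: "i \<in> {1..\<nu>}" for i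
  proof -
    have s1: "\<sigma> (i - 1) < L" "x (i - 1) = real (\<sigma> (i - 1)) / real L" using sig[of "i - 1"] i by auto
    have s2: "\<sigma> i < L" "x i = real (\<sigma> i) / real L" using sig[of i] i by auto
    have le1: "k * \<sigma> (i - 1) \<le> k * \<sigma> i" using mono[OF i] by simp
    have le2: "k * \<sigma> i \<le> q"
    proof (cases "k = 0")
      case False
      have a: "k * \<sigma> i \<le> k * (L - 1)" using s2(1) by (intro mult_le_mono2) linarith
      have "int (k * \<sigma> i) \<le> int (k * (L - 1))" using a by (simp only: of_nat_le_iff)
      also have "\<dots> = int (k * L) - int k" using L by (simp add: algebra_simps of_nat_diff)
      also have "\<dots> \<le> int q"
      proof -
        have "\<rho> \<le> 1" using rho by auto
        moreover have "int k \<ge> 1" using False by simp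
        ultimately show ?thesis using kL by linarith
      qed
      finally show ?thesis by (simp only: of_nat_le_iff)
    qed simp
    have "(\<Sum>v<q. (if k * \<sigma> (i - 1) \<le> v \<and> v < k * \<sigma> i then 1 else 0 :: real))
        = real (k * \<sigma> i) - real (k * \<sigma> (i - 1))" by (rule count_sum[OF le1 le2])
    also have "\<dots> = real k * real L * (x i - x (i - 1))" using L unfolding s1(2) s2(2)
      by (simp add: field_simps)
    finally show ?thesis unfolding kLr .
  qed
  have HS: "(\<Sum>v<q. H v) = SA * (real d - 1/2) + of_int \<rho> * M"
  proof -
    have "(\<Sum>v<q. H v) = SA * (\<Sum>v<q. ((real v + real d) / real q - 1/2))
       + (\<Sum>i=1..\<nu>. c i * ((\<Sum>v<q. (if k * \<sigma> (i - 1) \<le> v \<and> v < k * \<sigma> i then 1 else 0 :: real)) - real q * (x i - x (i - 1))))"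
      unfolding H_def by (simp add: sum.distrib sum_distrib_left sum_subtractf algebra_simps) (rule sum.swap)
    also have "(\<Sum>v<q. ((real v + real d) / real q - 1/2)) = real d - 1/2"
    proof -
      have "(\<Sum>v<q. ((real v + real d) / real q - 1/2)) = ((\<Sum>v<q. real v) + real q * real d) / real q - real q / 2"
        by (simp add: sum_subtractf sum_divide_distrib[symmetric] sum.distrib)
      also have "\<dots> = real d - 1/2" using q unfolding sum_lt_real by (simp add: field_simps)
      finally show ?thesis .
    qed
    also have "(\<Sum>i=1..\<nu>. c i * ((\<Sum>v<q. (if k * \<sigma> (i - 1) \<le> v \<and> v < k * \<sigma> i then 1 else 0 :: real)) - real q * (x i - x (i - 1))))
        = (\<Sum>i=1..\<nu>. of_int \<rho> * (c i * (x i - x (i - 1))))"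
    proof (rule sum.cong)
      fix i assume i: "i \<in> {1..\<nu>}"
      show "c i * ((\<Sum>v<q. (if k * \<sigma> (i - 1) \<le> v \<and> v < k * \<sigma> i then 1 else 0 :: real)) - real q * (x i - x (i - 1)))
        = of_int \<rho> * (c i * (x i - x (i - 1)))"
        unfolding cnt[OF i] by (simp add: algebra_simps)
    qed simp
    finally show ?thesis unfolding M by (simp add: sum_distrib_left)
  qed
  show ?thesis unfolding S_sum_def intg sumg HS by simp
qed


lemma common_denom:
  fixes x :: "nat \<Rightarrow> real"
  assumes "\<And>i. i \<in> {1..n} \<Longrightarrow> x i \<in> \<rat>"
  shows "\<exists>L::nat. L \<ge> 1 \<and> (\<forall>i\<in>{1..n}. real L * x i \<in> \<int>)"
  using assms
proof (induction n)
  case 0 then show ?case by (intro exI[of _ 1]) auto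
next
  case (Suc n)
  then obtain L :: nat where L: "L \<ge> 1" "\<forall>i\<in>{1..n}. real L * x i \<in> \<int>" by auto
  have "x (Suc n) \<in> \<rat>" using Suc.prems by auto
  then obtain a b :: int where ab: "b > 0" "x (Suc n) = of_int a / of_int b" by (elim Rats_cases') auto
  define L' where "L' = L * nat b"
  have L'1: "L' \<ge> 1" using L ab by (simp add: L'_def Suc_le_eq)
  have rb: "real (nat b) = of_int b" using ab by simp
  have "real L' * x i \<in> \<int>" if i: "i \<in> {1..Suc n}" for i
  proof (cases "i = Suc n")
    case True
    have "real L' * x i = real L * of_int a" using ab True unfolding L'_def by (simp add: rb)
    then show ?thesis by simp
  next
    case False
    then have "i \<in> {1..n}" using i by auto
    then have "real L * x i \<in> \<int>" using L by auto
    moreover have "real L' * x i = of_int b * (real L * x i)" unfolding L'_def by (simp add: rb)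
    ultimately show ?thesis using Ints_mult[OF Ints_of_int[of b], where 'a=real] by metis
  qed
  then show ?case using L'1 by blast
qed

lemma get_k:
  fixes q L :: nat and \<rho> \<gamma> :: int
  assumes "L \<ge> 1" "int q mod int L = \<gamma> mod int L" "\<gamma> = - \<rho>" "int q + \<rho> \<ge> 0"
  shows "\<exists>k. int (k * L) = int q + \<rho>"
proof -
  have "(int q + \<rho>) mod int L = (int q mod int L + \<rho>) mod int L" by (simp add: mod_add_left_eq)
  also have "\<dots> = ((- \<rho>) mod int L + \<rho>) mod int L" using assms(2,3) by simp
  also have "\<dots> = (- \<rho> + \<rho>) mod int L" by (simp only: mod_add_left_eq)
  finally have "(int q + \<rho>) mod int L = 0" by simp
  then obtain m where m: "int q + \<rho> = int L * m" by auto
  have "0 \<le> int L * m" using m assms(4) by simp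
  then have "m \<ge> 0" using assms(1) by (simp add: zero_le_mult_iff)
  then show ?thesis using m by (intro exI[of _ "nat m"]) (simp add: mult.commute)
qed

lemma blockK:
  fixes \<alpha> C SA M :: real and L K k b \<nu> :: nat and \<rho> :: int and \<sigma> :: "nat \<Rightarrow> nat"
    and c x :: "nat \<Rightarrow> real" and g :: "real \<Rightarrow> real"
  assumes a0: "0 < \<alpha>" and a1: "\<alpha> < 1" and air: "\<alpha> \<notin> \<rat>" and K: "K \<ge> 1" and L: "L \<ge> 1"
    and C: "C > 0" and CL: "C * real L \<le> 1" and bC: "real b \<le> C * real (cf_a \<alpha> K)"
    and kL: "int (k * L) = int (cf_q \<alpha> (K - 1)) + \<rho>" and rho: "\<rho> \<in> {-1, 0, 1}"
    and r1: "\<rho> = 1 \<Longrightarrow> th \<alpha> (K - 1) > 0" and r2: "\<rho> = -1 \<Longrightarrow> th \<alpha> (K - 1) < 0"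
    and sig: "\<And>i. i \<le> \<nu> \<Longrightarrow> \<sigma> i < L \<and> x i = real (\<sigma> i) / real L"
    and mono: "\<And>i. i \<in> {1..\<nu>} \<Longrightarrow> \<sigma> (i - 1) \<le> \<sigma> i"
    and hg: "\<And>y. g y = (frac y - 1/2) * SA
              + (\<Sum>i=1..\<nu>. c i * (indicator {x (i - 1)..<x i} (frac y) - (x i - x (i - 1))))"
    and intg: "integral {0..1} g = 0"
    and M: "M = (\<Sum>i=1..\<nu>. c i * (x i - x (i - 1)))"
  defines "d \<equiv> (if th \<alpha> (K - 1) > 0 then 0 else 1::nat)"
  shows "\<bar>S_sum (b * cf_q \<alpha> (K - 1)) g \<alpha> - real b * (SA * (real d - 1/2) + of_int \<rho> * M)\<bar> \<le> real b * (\<bar>SA\<bar> * C)"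
proof -
  note A = a0 a1 air
  define q where "q = cf_q \<alpha> (K - 1)"
  define p where "p = cf_p \<alpha> (K - 1)"
  define \<theta> where "\<theta> = th \<alpha> (K - 1)"
  define P where "P = Pp \<alpha> (K - 1)"
  have q1: "q \<ge> 1" unfolding q_def by (rule q_pos[OF A])
  have P0: "P > 0" unfolding P_def by (rule Pp_pos[OF A])
  have thP: "\<theta> = (-1) ^ (K - 1) * P" unfolding \<theta>_def P_def using th_eq[OF A] by blast
  have absth: "\<bar>\<theta>\<bar> = P" using thP P0 by (simp add: abs_mult)
  have thnz: "\<theta> \<noteq> 0" using absth P0 by auto
  have al: "\<alpha> = (real p + \<theta>) / real q" using q1 unfolding \<theta>_def th_def p_def q_def by (simp add: field_simps)
  have cop: "coprime p q" unfolding p_def q_def by (rule pq_coprime)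
  have det: "real (cf_q \<alpha> K) * P + real q * Pp \<alpha> K = 1"
    using det_id[OF A, of "K - 1"] K unfolding P_def q_def by simp
  have PK: "Pp \<alpha> K > 0" by (rule Pp_pos[OF A])
  have qKP: "real (cf_q \<alpha> K) * P < 1" using det PK q1 by (smt (verit) mult_pos_pos of_nat_0_less_iff less_le_trans zero_less_one)
  have qge: "real (cf_a \<alpha> K) * real q \<le> real (cf_q \<alpha> K)"
    using q_ge[OF A K] unfolding q_def by (metis of_nat_mono of_nat_mult)
  have aqP: "real (cf_a \<alpha> K) * real q * P < 1"
  proof -
    have "real (cf_a \<alpha> K) * real q * P \<le> real (cf_q \<alpha> K) * P" using qge P0 by (intro mult_right_mono) auto
    then show ?thesis using qKP by linarith
  qed
  have bqP: "real b * real q * P \<le> C * (real (cf_a \<alpha> K) * real q * P)"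
  proof -
    have "real b * (real q * P) \<le> (C * real (cf_a \<alpha> K)) * (real q * P)" using bC P0 by (intro mult_right_mono) auto
    then show ?thesis by (simp add: algebra_simps)
  qed
  have bqP2: "real b * real q * P \<le> C"
  proof -
    have "C * (real (cf_a \<alpha> K) * real q * P) \<le> C * 1" using aqP C by (intro mult_left_mono) auto
    then show ?thesis using bqP by linarith
  qed
  have sm: "real L * real (b * q) * \<bar>\<theta>\<bar> < 1"
  proof -
    have "real L * real (b * q) * \<bar>\<theta>\<bar> = real L * (real b * real q * P)" unfolding absth by simp
    also have "\<dots> \<le> real L * (C * (real (cf_a \<alpha> K) * real q * P))" using bqP by (intro mult_left_mono) auto
    also have "\<dots> = (C * real L) * (real (cf_a \<alpha> K) * real q * P)" by simp
    also have "\<dots> \<le> 1 * (real (cf_a \<alpha> K) * real q * P)" using CL P0 by (intro mult_right_mono) auto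
    finally show ?thesis using aqP by linarith
  qed
  have kL': "int (k * L) = int q + \<rho>" using kL unfolding q_def .
  have r1': "\<rho> = 1 \<Longrightarrow> \<theta> > 0" using r1 unfolding \<theta>_def .
  have r2': "\<rho> = -1 \<Longrightarrow> \<theta> < 0" using r2 unfolding \<theta>_def .
  have d': "d = (if \<theta> > 0 then 0 else 1)" unfolding d_def \<theta>_def ..
  have eq: "S_sum (b * q) g \<alpha> = real b * (SA * (real d - 1/2) + of_int \<rho> * M)
           + SA * (\<Sum>n=1..b * q. real n * \<theta> / real q)"
    unfolding d' by (rule block[OF q1 L al thnz cop sm kL' rho r1' r2' sig mono hg intg M])
  have sb: "\<bar>\<Sum>n=1..b * q. real n * \<theta> / real q\<bar> \<le> real b * C"
  proof -
    have "\<bar>\<Sum>n=1..b * q. real n * \<theta> / real q\<bar> \<le> (\<Sum>n=1..b * q. \<bar>real n * \<theta> / real q\<bar>)"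
      by (rule sum_abs)
    also have "\<dots> \<le> (\<Sum>n=1..b * q. real b * P)"
    proof (rule sum_mono)
      fix n assume n: "n \<in> {1..b * q}"
      have "\<bar>real n * \<theta> / real q\<bar> = real n * P / real q" using absth by (simp add: abs_mult)
      also have "\<dots> \<le> real (b * q) * P / real q"
      proof -
        have nb: "real n \<le> real (b * q)" using n of_nat_le_iff by fastforce
        show ?thesis using nb P0 q1 by (intro divide_right_mono mult_right_mono) auto
      qed
      also have "\<dots> = real b * P" using q1 by simp
      finally show "\<bar>real n * \<theta> / real q\<bar> \<le> real b * P" .
    qed
    also have "\<dots> = real b * (real b * real q * P)" by (simp add: algebra_simps)
    also have "\<dots> \<le> real b * C" using bqP2 by (intro mult_left_mono) auto
    finally show ?thesis .
  qed
  have "\<bar>SA * (\<Sum>n=1..b * q. real n * \<theta> / real q)\<bar> \<le> \<bar>SA\<bar> * (real b * C)"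
    unfolding abs_mult using sb by (intro mult_left_mono) auto
  then show ?thesis unfolding q_def[symmetric] eq by (simp add: algebra_simps)
qed



lemma x_mono:
  fixes x :: "nat \<Rightarrow> real"
  assumes inc: "\<forall>i\<in>{1..<\<nu>}. x i < x (Suc i)" and i: "1 \<le> i" and ij: "i \<le> j" and j: "j \<le> \<nu>"
  shows "x i \<le> x j"
  using ij j
proof (induction j rule: dec_induct)
  case base then show ?case by simp
next
  case (step m)
  then have "x m < x (Suc m)" using inc i by auto
  then show ?case using step by simp
qed

lemma fin1: fixes S b e T :: real
  assumes "\<bar>S - b * e\<bar> \<le> b * (\<bar>e\<bar> / 2)" "e > 0" "T \<ge> 0"
  shows "b * (\<bar>e\<bar> / 2) - 1 * T \<le> S"
proof -
  have "S - b * e \<ge> - (b * (\<bar>e\<bar> / 2))" using assms(1) by linarith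
  then show ?thesis using assms(2,3) by simp
qed

lemma fin2: fixes S b e T :: real
  assumes "\<bar>S + b * e\<bar> \<le> b * (\<bar>e\<bar> / 2)" "e > 0" "T \<ge> 0"
  shows "S \<le> - (b * (\<bar>e\<bar> / 2)) + 1 * T"
proof -
  have "S + b * e \<le> b * (\<bar>e\<bar> / 2)" using assms(1) by linarith
  then show ?thesis using assms(2,3) by simp
qed

lemma fin3: fixes S b e T :: real
  assumes "\<bar>S + b * e\<bar> \<le> b * (\<bar>e\<bar> / 2)" "e < 0" "T \<ge> 0"
  shows "b * (\<bar>e\<bar> / 2) - 1 * T \<le> S"
proof -
  have "S + b * e \<ge> - (b * (\<bar>e\<bar> / 2))" using assms(1) by linarith
  then show ?thesis using assms(2,3) by simp
qed

lemma fin4: fixes S b e T :: real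
  assumes "\<bar>S - b * e\<bar> \<le> b * (\<bar>e\<bar> / 2)" "e < 0" "T \<ge> 0"
  shows "S \<le> - (b * (\<bar>e\<bar> / 2)) + 1 * T"
proof -
  have "S - b * e \<le> b * (\<bar>e\<bar> / 2)" using assms(1) by linarith
  then show ?thesis using assms(2,3) by simp
qed

theorem lemma3p8:
  fixes f :: "real \<Rightarrow> real" and \<nu> :: nat and x :: "nat \<Rightarrow> real"
    and A c :: "nat \<Rightarrow> real" and g :: "real \<Rightarrow> real"
  assumes hf: "pw_smooth_rat_disc f \<nu> x"
    and hx0: "x 0 = 0"
    and hA: "\<And>i. A i = jump f (x i)"
    and hc: "\<And>i. c i = (\<Sum>j=1..i. A j)"
    and hg: "\<And>y. g y = (frac y - 1/2) * (\<Sum>i=1..\<nu>. A i)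
              + (\<Sum>i=1..\<nu>. c i * (indicator {x (i - 1)..<x i} (frac y) - (x i - x (i - 1))))"
    and hnd: "(\<Sum>i=1..\<nu>. A i) \<noteq> 0 \<or> (\<Sum>i=1..\<nu>. c i * (x i - x (i - 1))) \<noteq> 0"
  shows "\<exists>C C' D :: real. C > 0 \<and> C' > 0 \<and> D > 0 \<and>
    (\<exists>\<mu>1 \<beta>1 \<gamma>1 \<delta>1 \<mu>2 \<beta>2 \<gamma>2 \<delta>2 :: int. \<beta>1 > 0 \<and> \<delta>1 > 0 \<and> \<beta>2 > 0 \<and> \<delta>2 > 0 \<and>
      (\<forall>\<alpha>::real. 0 < \<alpha> \<and> \<alpha> < 1 \<and> \<alpha> \<notin> \<rat> \<longrightarrow>
        (\<exists>K0 N0 :: nat. \<forall>K \<ge> K0. cf_a \<alpha> K \<ge> N0 \<longrightarrow>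
          ((int K mod \<beta>1 = \<mu>1 mod \<beta>1 \<and> int (cf_q \<alpha> (K - 1)) mod \<delta>1 = \<gamma>1 mod \<delta>1 \<longrightarrow>
             (\<forall>b::nat. real b \<le> C * real (cf_a \<alpha> K) \<longrightarrow>
                S_sum (b * cf_q \<alpha> (K - 1)) g \<alpha>
                  \<ge> real b * C' - D * (\<Sum>i=1..K - 1. real (cf_a \<alpha> i)))) \<and>
           (int K mod \<beta>2 = \<mu>2 mod \<beta>2 \<and> int (cf_q \<alpha> (K - 1)) mod \<delta>2 = \<gamma>2 mod \<delta>2 \<longrightarrow>
             (\<forall>b::nat. real b \<le> C * real (cf_a \<alpha> K) \<longrightarrow>
                S_sum (b * cf_q \<alpha> (K - 1)) g \<alpha>
                  \<le> - (real b * C') + D * (\<Sum>i=1..K - 1. real (cf_a \<alpha> i))))))))"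
proof -
  have per: "\<nu> \<ge> 1" and rat: "\<forall>i\<in>{1..\<nu>}. x i \<in> \<rat>" and x1: "0 \<le> x 1" and xn: "x \<nu> < 1"
    and inc: "\<forall>i\<in>{1..<\<nu>}. x i < x (Suc i)"
    using hf unfolding pw_smooth_rat_disc_def by auto
  have xr: "0 \<le> x i \<and> x i < 1" if i: "i \<in> {1..\<nu>}" for i
    using x_mono[OF inc, of 1 i] x_mono[OF inc, of i \<nu>] i x1 xn by auto
  have xm: "x (i - 1) \<le> x i" if i: "i \<in> {1..\<nu>}" for i
  proof (cases "i = 1")
    case True then show ?thesis using hx0 x1 by simp
  next
    case False
    then have "i - 1 \<in> {1..<\<nu>}" using i by auto
    then have "x (i - 1) < x (Suc (i - 1))" using inc by blast
    then show ?thesis using False i by simp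
  qed
  obtain L :: nat where L: "L \<ge> 1" and Lx: "\<forall>i\<in>{1..\<nu>}. real L * x i \<in> \<int>"
    using common_denom[of \<nu> x] rat by blast
  define \<sigma> where "\<sigma> i = nat \<lfloor>real L * x i\<rfloor>" for i
  have sig: "\<sigma> i < L \<and> x i = real (\<sigma> i) / real L" if i: "i \<le> \<nu>" for i
  proof (cases "i = 0")
    case True then show ?thesis using hx0 L by (simp add: \<sigma>_def)
  next
    case False
    then have i1: "i \<in> {1..\<nu>}" using i by auto
    have Z: "real L * x i \<in> \<int>" using Lx i1 by blast
    have nn: "real L * x i \<ge> 0" using xr[OF i1] by simp
    obtain z where z: "real L * x i = of_int z" using Z by (auto elim: Ints_cases)
    have z0: "z \<ge> 0" using nn z by simp
    have rs: "real (\<sigma> i) = real L * x i" unfolding \<sigma>_def z using z0 by simp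
    have "real L * x i < real L" using xr[OF i1] L by simp
    then have "\<sigma> i < L" using rs by linarith
    then show ?thesis using rs L by (simp add: field_simps)
  qed
  have mono: "\<sigma> (i - 1) \<le> \<sigma> i" if i: "i \<in> {1..\<nu>}" for i
  proof -
    have "real (\<sigma> (i - 1)) / real L \<le> real (\<sigma> i) / real L"
      using xm[OF i] sig[of "i - 1"] sig[of i] i by auto
    then have "real (\<sigma> (i - 1)) \<le> real (\<sigma> i)" using L by (simp add: divide_le_cancel)
    then show ?thesis by simp
  qed
  define SA where "SA = (\<Sum>i=1..\<nu>. A i)"
  define M where "M = (\<Sum>i=1..\<nu>. c i * (x i - x (i - 1)))"
  have hg': "\<And>y. g y = (frac y - 1/2) * SA
              + (\<Sum>i=1..\<nu>. c i * (indicator {x (i - 1)..<x i} (frac y) - (x i - x (i - 1))))"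
    using hg unfolding SA_def .
  have intg: "integral {0..1} g = 0"
  proof (rule integral_g_zero[OF hg'])
    fix i assume i: "i \<in> {1..\<nu>}"
    have a: "0 \<le> x (i - 1)"
    proof (cases "i = 1")
      case True then show ?thesis using hx0 by simp
    next
      case False then have "i - 1 \<in> {1..\<nu>}" using i by auto
      then show ?thesis using xr by blast
    qed
    show "0 \<le> x (i - 1) \<and> x (i - 1) \<le> x i \<and> x i \<le> 1" using a xm[OF i] xr[OF i] by simp
  qed
  define \<rho>0 :: int where "\<rho>0 = (if SA \<noteq> 0 then 0 else 1)"
  define e where "e = of_int \<rho>0 * M - SA / 2"
  have e0: "e \<noteq> 0"
  proof (cases "SA = 0")
    case True
    then have "M \<noteq> 0" using hnd unfolding SA_def M_def by auto
    then show ?thesis using True by (simp add: e_def \<rho>0_def)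
  next
    case False then show ?thesis by (simp add: e_def \<rho>0_def)
  qed
  define C where "C = min (1 / real L) (\<bar>e\<bar> / (2 * (\<bar>SA\<bar> + 1)))"
  have C0: "C > 0" using L e0 by (simp add: C_def)
  have CL: "C * real L \<le> 1"
  proof -
    have "C \<le> 1 / real L" by (simp add: C_def)
    then show ?thesis using L by (simp add: field_simps)
  qed
  have SAC: "\<bar>SA\<bar> * C \<le> \<bar>e\<bar> / 2"
  proof -
    have "C \<le> \<bar>e\<bar> / (2 * (\<bar>SA\<bar> + 1))" by (simp add: C_def)
    then have "\<bar>SA\<bar> * C \<le> \<bar>SA\<bar> * (\<bar>e\<bar> / (2 * (\<bar>SA\<bar> + 1)))" by (intro mult_left_mono) auto
    also have "\<dots> \<le> (\<bar>SA\<bar> + 1) * (\<bar>e\<bar> / (2 * (\<bar>SA\<bar> + 1)))" by (intro mult_right_mono) auto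
    also have "\<dots> = \<bar>e\<bar> / 2" by (simp add: field_simps add_pos_nonneg)
    finally show ?thesis .
  qed
  have rho0: "\<rho>0 \<in> {-1, 0, 1}" "- \<rho>0 \<in> {-1, 0, 1}" by (auto simp: \<rho>0_def)
  have odd_case: "\<bar>S_sum (b * cf_q \<alpha> (K - 1)) g \<alpha> - real b * e\<bar> \<le> real b * (\<bar>e\<bar> / 2)"
    if a: "0 < \<alpha>" "\<alpha> < 1" "\<alpha> \<notin> \<rat>" and K: "K \<ge> 1" and od: "odd K"
      and qc: "int (cf_q \<alpha> (K - 1)) mod int L = (- \<rho>0) mod int L"
      and bC: "real b \<le> C * real (cf_a \<alpha> K)" for \<alpha> K b
  proof -
    have q1: "cf_q \<alpha> (K - 1) \<ge> 1" by (rule q_pos[OF a])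
    obtain k where kL: "int (k * L) = int (cf_q \<alpha> (K - 1)) + \<rho>0"
      using get_k[OF L qc refl] q1 by (auto simp: \<rho>0_def)
    have th: "th \<alpha> (K - 1) > 0"
    proof -
      have "even (K - 1)" using od K by simp
      then show ?thesis using th_eq[OF a, of "K - 1"] Pp_pos[OF a, of "K - 1"] by simp
    qed
    note B = blockK[OF a K L C0 CL bC kL rho0(1) _ _ sig mono hg' intg M_def]
    have "\<bar>S_sum (b * cf_q \<alpha> (K - 1)) g \<alpha> - real b * e\<bar> \<le> real b * (\<bar>SA\<bar> * C)"
      using B th unfolding e_def by (simp add: \<rho>0_def split: if_splits)
    also have "\<dots> \<le> real b * (\<bar>e\<bar> / 2)" using SAC by (intro mult_left_mono) auto
    finally show ?thesis .
  qed
  have even_case: "\<bar>S_sum (b * cf_q \<alpha> (K - 1)) g \<alpha> + real b * e\<bar> \<le> real b * (\<bar>e\<bar> / 2)"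
    if a: "0 < \<alpha>" "\<alpha> < 1" "\<alpha> \<notin> \<rat>" and K: "K \<ge> 1" and ev: "even K"
      and qc: "int (cf_q \<alpha> (K - 1)) mod int L = \<rho>0 mod int L"
      and bC: "real b \<le> C * real (cf_a \<alpha> K)" for \<alpha> K b
  proof -
    have q1: "cf_q \<alpha> (K - 1) \<ge> 1" by (rule q_pos[OF a])
    have m: "\<rho>0 = - (- \<rho>0)" by simp
    have nn: "int (cf_q \<alpha> (K - 1)) + (- \<rho>0) \<ge> 0" using q1 by (simp add: \<rho>0_def)
    obtain k where kL: "int (k * L) = int (cf_q \<alpha> (K - 1)) + (- \<rho>0)"
      using get_k[OF L qc m nn] by blast
    have th: "th \<alpha> (K - 1) < 0"
    proof -
      have "odd (K - 1)" using ev K by simp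
      then show ?thesis using th_eq[OF a, of "K - 1"] Pp_pos[OF a, of "K - 1"] by simp
    qed
    note B = blockK[OF a K L C0 CL bC kL rho0(2) _ _ sig mono hg' intg M_def]
    have "\<bar>S_sum (b * cf_q \<alpha> (K - 1)) g \<alpha> + real b * e\<bar> \<le> real b * (\<bar>SA\<bar> * C)"
      using B th unfolding e_def by (simp add: \<rho>0_def algebra_simps split: if_splits)
    also have "\<dots> \<le> real b * (\<bar>e\<bar> / 2)" using SAC by (intro mult_left_mono) auto
    finally show ?thesis .
  qed
  have Cp: "\<bar>e\<bar> / 2 > 0" using e0 by simp
  have odd_iff: "(int K mod 2 = 1 mod 2) = odd K" for K :: nat by presburger
  have even_iff: "(int K mod 2 = 0 mod 2) = even K" for K :: nat by presburger
  have sn: "(\<Sum>i=1..K - 1. real (cf_a \<alpha> i)) \<ge> 0" for \<alpha> K by (simp add: sum_nonneg)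
  show ?thesis
  proof (cases "e > 0")
    case True
    show ?thesis
      apply (rule exI[of _ C], rule exI[of _ "\<bar>e\<bar> / 2"], rule exI[of _ 1])
      apply (intro conjI C0 Cp)
       apply simp
      apply (rule exI[of _ 1], rule exI[of _ 2], rule exI[of _ "- \<rho>0"], rule exI[of _ "int L"])
      apply (rule exI[of _ 0], rule exI[of _ 2], rule exI[of _ "\<rho>0"], rule exI[of _ "int L"])
      apply (intro conjI allI impI)
           apply (simp_all add: L)[4]
        apply (use L in linarith)
       apply (use L in linarith)
      apply (rule exI[of _ 1], rule exI[of _ 0])
      apply (intro allI impI conjI)
      subgoal for \<alpha> K b
        by (rule fin1[OF odd_case[of \<alpha> K b] True sn[of \<alpha> K]]) (use odd_iff[of K] in auto)
      subgoal for \<alpha> K b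
        by (rule fin2[OF even_case[of \<alpha> K b] True sn[of \<alpha> K]]) (use even_iff[of K] in auto)
      done
  next
    case False
    then have eneg: "e < 0" using e0 by simp
    show ?thesis
      apply (rule exI[of _ C], rule exI[of _ "\<bar>e\<bar> / 2"], rule exI[of _ 1])
      apply (intro conjI C0 Cp)
       apply simp
      apply (rule exI[of _ 0], rule exI[of _ 2], rule exI[of _ "\<rho>0"], rule exI[of _ "int L"])
      apply (rule exI[of _ 1], rule exI[of _ 2], rule exI[of _ "- \<rho>0"], rule exI[of _ "int L"])
      apply (intro conjI allI impI)
           apply (simp_all add: L)[4]
        apply (use L in linarith)
       apply (use L in linarith)
      apply (rule exI[of _ 1], rule exI[of _ 0])
      apply (intro allI impI conjI)
      subgoal for \<alpha> K b
        by (rule fin3[OF even_case[of \<alpha> K b] eneg sn[of \<alpha> K]]) (use even_iff[of K] in auto)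
      subgoal for \<alpha> K b
        by (rule fin4[OF odd_case[of \<alpha> K b] eneg sn[of \<alpha> K]]) (use odd_iff[of K] in auto)
      done
  qed
qed

end
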